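(* Let $X$ be a topological space and let $g,f:X\to\mathbb{R}$ be functions with $g\le f$ (i.e. $g(x)\le f(x)$ for all $x\in X$). Suppose there exist a strong binary relation $\rho$ on the power set $\mathcal{P}(X)$, and, for each rational number $t$, lower indefinite cut sets $A(f,t)$ and $A(g,t)$ in the domain of $f$ and $g$ respectively at the level $t$, such that whenever $t_1<t_2$ are rationals we have $A(f,t_1)\,\rho\,A(g,t_2)$. (a) If every $\Lambda$-set in $X$ is open, then there exists a contra-continuous function $h:X\to\mathbb{R}$ with $g\le h\le f$. (b) If every $\Lambda$-set in $X$ is a $G_\delta$-set, then there exists a Baire-one function $h:X\to\mathbb{R}$ with $g\le h\le f$.
   Context: A $\Lambda$-set in a topological space $X$ is a set that is an intersection of open sets. For $A\subseteq X$, define $A^{\Lambda}=\bigcap\{O: O\supseteq A,\ O \text{ open}\}$ and $A^{V}=\bigcup\{F: F\subseteq A,\ F \text{ closed}\}$. For a binary relation $\rho$ on a set $S$, define $\bar\rho$ by: $x\,\bar\rho\,y$ iff for all $u,v\in S$, ($y\,\rho\,v$ implies $x\,\rho\,v$) and ($u\,\rho\,x$ implies $u\,\rho\,y$). A binary relation $\rho$ on $\mathcal{P}(X)$ is a strong binary relation if: (1) whenever $A_i\,\rho\,B_j$ for all $i\in\{1,\dots,m\}$ and $j\in\{1,\dots,n\}$, there is $C\in\mathcal{P}(X)$ with $A_i\,\rho\,C$ and $C\,\rho\,B_j$ for all such $i,j$; (2) $A\subseteq B$ implies $A\,\bar\rho\,B$; (3) $A\,\rho\,B$ implies $A^{\Lambda}\subseteq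 B$ and $A\subseteq B^{V}$. For $f:X\to\mathbb{R}$ and $l\in\mathbb{R}$, a set $A(f,l)$ with $\{x: f(x)<l\}\subseteq A(f,l)\subseteq\{x: f(x)\le l\}$ is a lower indefinite cut set in the domain of $f$ at level $l$. A function $h:X\to\mathbb{R}$ is contra-continuous (resp. Baire-one) if the preimage of every open subset of $\mathbb{R}$ is closed (resp. an $F_\sigma$-set) in $X$. *)

theory Defs
  imports "HOL-Analysis.Analysis"
begin

text \<open>A Lambda-set in X: an intersection of (an arbitrary family of) open sets of X.
  The empty family gives X itself.\<close>
definition lambda_set_in :: "'a topology \<Rightarrow> 'a set \<Rightarrow> bool" where
  "lambda_set_in T S \<longleftrightarrow> (\<exists>\<U>. (\<forall>U\<in>\<U>. openin T U) \<and> S = topspace T \<inter> \<Inter>\<U>)"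

definition lambda_hull :: "'a topology \<Rightarrow> 'a set \<Rightarrow> 'a set" where
  "lambda_hull T A = topspace T \<inter> \<Inter>{U. openin T U \<and> A \<subseteq> U}"

definition vee_kernel :: "'a topology \<Rightarrow> 'a set \<Rightarrow> 'a set" where
  "vee_kernel T A = \<Union>{F. closedin T F \<and> F \<subseteq> A}"

definition rel_bar :: "'a topology \<Rightarrow> ('a set \<Rightarrow> 'a set \<Rightarrow> bool) \<Rightarrow> 'a set \<Rightarrow> 'a set \<Rightarrow> bool" where
  "rel_bar T \<rho> x y \<longleftrightarrow>
     (\<forall>u v. u \<subseteq> topspace T \<and> v \<subseteq> topspace T \<longrightarrow>
        (\<rho> y v \<longrightarrow> \<rho> x v) \<and> (\<rho> u x \<longrightarrow> \<rho> u y))"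

text \<open>Strong binary relation on P(X). The finite families A_1..A_m, B_1..B_n
  (m, n >= 1) are represented by finite nonempty sets of subsets of X.\<close>
definition strong_binary_relation :: "'a topology \<Rightarrow> ('a set \<Rightarrow> 'a set \<Rightarrow> bool) \<Rightarrow> bool" where
  "strong_binary_relation T \<rho> \<longleftrightarrow>
     (\<forall>\<A> \<B>. finite \<A> \<and> finite \<B> \<and> \<A> \<noteq> {} \<and> \<B> \<noteq> {} \<and>
        \<A> \<subseteq> Pow (topspace T) \<and> \<B> \<subseteq> Pow (topspace T) \<and>
        (\<forall>A\<in>\<A>. \<forall>B\<in>\<B>. \<rho> A B) \<longrightarrow>
        (\<exists>C. C \<subseteq> topspace T \<and> (\<forall>A\<in>\<A>. \<rho> A C) \<and> (\<forall>B\<in>\<B>. \<rho> C B)))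
   \<and> (\<forall>A B. A \<subseteq> B \<and> B \<subseteq> topspace T \<longrightarrow> rel_bar T \<rho> A B)
   \<and> (\<forall>A B. A \<subseteq> topspace T \<and> B \<subseteq> topspace T \<and> \<rho> A B \<longrightarrow>
        lambda_hull T A \<subseteq> B \<and> A \<subseteq> vee_kernel T B)"

definition lower_cut_set :: "'a topology \<Rightarrow> ('a \<Rightarrow> real) \<Rightarrow> real \<Rightarrow> 'a set \<Rightarrow> bool" where
  "lower_cut_set T f l A \<longleftrightarrow>
     {x \<in> topspace T. f x < l} \<subseteq> A \<and> A \<subseteq> {x \<in> topspace T. f x \<le> l}"

definition contra_continuous_on :: "'a topology \<Rightarrow> ('a \<Rightarrow> real) \<Rightarrow> bool" where
  "contra_continuous_on T h \<longleftrightarrow>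
     (\<forall>U. open U \<longrightarrow> closedin T {x \<in> topspace T. h x \<in> U})"

definition baire_one_on :: "'a topology \<Rightarrow> ('a \<Rightarrow> real) \<Rightarrow> bool" where
  "baire_one_on T h \<longleftrightarrow>
     (\<forall>U. open U \<longrightarrow> fsigma_in T {x \<in> topspace T. h x \<in> U})"

end

theory Submission
  imports Defs
begin

definition adjR :: "'a topology \<Rightarrow> 'a \<Rightarrow> 'a \<Rightarrow> bool" where
  "adjR T x y \<longleftrightarrow> x \<in> topspace T \<and> y \<in> topspace T \<and>
     (x \<in> T closure_of {y} \<or> y \<in> T closure_of {x})"

lemma adjR_sym: "adjR T x y \<Longrightarrow> adjR T y x"
  unfolding adjR_def by blast

lemma rtc_sym: "(adjR T)\<^sup>*\<^sup>* x y \<Longrightarrow> (adjR T)\<^sup>*\<^sup>* y x"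
proof (induction rule: rtranclp_induct)
  case base then show ?case by simp
next
  case (step y z)
  then show ?case using adjR_sym
    by (metis converse_rtranclp_into_rtranclp)
qed

lemma rtc_top: "(adjR T)\<^sup>*\<^sup>* x y \<Longrightarrow> x \<in> topspace T \<Longrightarrow> y \<in> topspace T"
  by (induction rule: rtranclp_induct) (auto simp: adjR_def)

lemma strong_proj:
  assumes "strong_binary_relation T \<rho>" "A \<subseteq> topspace T" "B \<subseteq> topspace T" "\<rho> A B"
  shows "lambda_hull T A \<subseteq> B" "A \<subseteq> vee_kernel T B"
proof -
  have "\<forall>A B. A \<subseteq> topspace T \<and> B \<subseteq> topspace T \<and> \<rho> A B \<longrightarrow>
        lambda_hull T A \<subseteq> B \<and> A \<subseteq> vee_kernel T B"
    using assms(1) unfolding strong_binary_relation_def by (elim conjE)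
  then show "lambda_hull T A \<subseteq> B" "A \<subseteq> vee_kernel T B" using assms(2-4) by simp_all
qed

lemma strong_interp:
  assumes "strong_binary_relation T \<rho>" "A \<subseteq> topspace T" "B \<subseteq> topspace T" "\<rho> A B"
  obtains C where "C \<subseteq> topspace T" "\<rho> A C" "\<rho> C B"
proof -
  have H: "\<forall>\<A> \<B>. finite \<A> \<and> finite \<B> \<and> \<A> \<noteq> {} \<and> \<B> \<noteq> {} \<and>
        \<A> \<subseteq> Pow (topspace T) \<and> \<B> \<subseteq> Pow (topspace T) \<and>
        (\<forall>A\<in>\<A>. \<forall>B\<in>\<B>. \<rho> A B) \<longrightarrow>
        (\<exists>C. C \<subseteq> topspace T \<and> (\<forall>A\<in>\<A>. \<rho> A C) \<and> (\<forall>B\<in>\<B>. \<rho> C B))"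
    using assms(1) unfolding strong_binary_relation_def by (elim conjE)
  have "\<exists>C. C \<subseteq> topspace T \<and> (\<forall>A'\<in>{A}. \<rho> A' C) \<and> (\<forall>B'\<in>{B}. \<rho> C B')"
    using H[rule_format, of "{A}" "{B}"] assms(2-4) by simp
  then show ?thesis using that by auto
qed

lemma one_step:
  assumes strong: "strong_binary_relation T \<rho>"
    and A: "A \<subseteq> topspace T" and B: "B \<subseteq> topspace T" and r: "\<rho> A B"
    and x: "x \<in> A" and xy: "adjR T x y"
  shows "y \<in> B"
proof -
  have h1: "lambda_hull T A \<subseteq> B" and h2: "A \<subseteq> vee_kernel T B"
    using strong_proj[OF strong A B r] by auto
  have y: "y \<in> topspace T" using xy adjR_def by metis
  show ?thesis
  proof (cases "x \<in> T closure_of {y}")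
    case True
    have "y \<in> lambda_hull T A"
      unfolding lambda_hull_def
    proof (intro IntI InterI y)
      fix U assume "U \<in> {U. openin T U \<and> A \<subseteq> U}"
      then have U: "openin T U" "x \<in> U" using x by auto
      then show "y \<in> U" using True by (auto simp: in_closure_of)
    qed
    then show ?thesis using h1 by blast
  next
    case False
    then have yx: "y \<in> T closure_of {x}" using xy adjR_def by metis
    obtain F where F: "closedin T F" "F \<subseteq> B" "x \<in> F"
      using h2 x unfolding vee_kernel_def by blast
    have "T closure_of {x} \<subseteq> F" using F closure_of_minimal by (metis empty_subsetI insert_subset)
    then show ?thesis using yx F by blast
  qed
qed

lemma chain_lemma:
  assumes strong: "strong_binary_relation T \<rho>"
  shows "(adjR T)\<^sup>*\<^sup>* x y \<Longrightarrow> \<forall>A B. A \<subseteq> topspace T \<and> B \<subseteq> topspace T \<and> \<rho> A B \<and> x \<in> A \<longrightarrow> y \<in> B"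
proof (induction rule: rtranclp_induct)
  case base
  show ?case
  proof (intro allI impI)
    fix A B assume H: "A \<subseteq> topspace T \<and> B \<subseteq> topspace T \<and> \<rho> A B \<and> x \<in> A"
    then have "A \<subseteq> vee_kernel T B"
      using strong_proj(2)[OF strong] by (elim conjE)
    moreover have "vee_kernel T B \<subseteq> B" unfolding vee_kernel_def by blast
    ultimately show "x \<in> B" using H by blast
  qed
next
  case (step y z)
  show ?case
  proof (intro allI impI)
    fix A B assume H: "A \<subseteq> topspace T \<and> B \<subseteq> topspace T \<and> \<rho> A B \<and> x \<in> A"
    obtain C where C: "C \<subseteq> topspace T" "\<rho> A C" "\<rho> C B"
      using strong_interp[OF strong] H by blast
    have "y \<in> C" using step.IH H C by blast
    then show "z \<in> B" using one_step[OF strong C(1) _ C(3) _ step.hyps(2)] H by blast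
  qed
qed

lemma saturated_lambda:
  assumes W: "W \<subseteq> topspace T"
    and sat: "\<And>x y. x \<in> W \<Longrightarrow> y \<in> topspace T \<Longrightarrow> x \<in> T closure_of {y} \<Longrightarrow> y \<in> W"
  shows "lambda_set_in T W"
  unfolding lambda_set_in_def
proof (intro exI conjI)
  let ?U = "{topspace T - T closure_of {y} | y. y \<in> topspace T \<and> y \<notin> W}"
  show "\<forall>U\<in>?U. openin T U" by (auto intro: openin_diff closedin_closure_of)
  show "W = topspace T \<inter> \<Inter>?U"
  proof
    show "W \<subseteq> topspace T \<inter> \<Inter>?U" using W sat by blast
    show "topspace T \<inter> \<Inter>?U \<subseteq> W"
    proof
      fix x assume x: "x \<in> topspace T \<inter> \<Inter>?U"
      show "x \<in> W"
      proof (rule ccontr)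
        assume "x \<notin> W"
        then have "topspace T - T closure_of {x} \<in> ?U" using x by blast
        moreover have "x \<in> T closure_of {x}" using x
          by (auto simp: in_closure_of)
        ultimately show False using x by blast
      qed
    qed
  qed
qed

theorem theorem1:
  fixes T :: "'a topology" and f g :: "'a \<Rightarrow> real"
    and \<rho> :: "'a set \<Rightarrow> 'a set \<Rightarrow> bool"
    and Af Ag :: "rat \<Rightarrow> 'a set"
  assumes g_le_f: "\<forall>x\<in>topspace T. g x \<le> f x"
    and strong: "strong_binary_relation T \<rho>"
    and cut_f: "\<forall>t. lower_cut_set T f (of_rat t) (Af t)"
    and cut_g: "\<forall>t. lower_cut_set T g (of_rat t) (Ag t)"
    and rel: "\<forall>t1 t2. t1 < t2 \<longrightarrow> \<rho> (Af t1) (Ag t2)"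
  shows "((\<forall>S. lambda_set_in T S \<longrightarrow> openin T S) \<longrightarrow>
            (\<exists>h. contra_continuous_on T h \<and> (\<forall>x\<in>topspace T. g x \<le> h x \<and> h x \<le> f x)))
       \<and> ((\<forall>S. lambda_set_in T S \<longrightarrow> gdelta_in T S) \<longrightarrow>
            (\<exists>h. baire_one_on T h \<and> (\<forall>x\<in>topspace T. g x \<le> h x \<and> h x \<le> f x)))"
proof -
  let ?R = "(adjR T)\<^sup>*\<^sup>*"
  have key: "g y \<le> f x" if xy: "?R x y" and x: "x \<in> topspace T" for x y
  proof (rule ccontr)
    assume "\<not> g y \<le> f x"
    then have "f x < g y" by simp
    obtain r1 where r1: "r1 \<in> \<rat>" "f x < r1" "r1 < (f x + g y) / 2"
      using Rats_dense_in_real[of "f x" "(f x + g y) / 2"] \<open>f x < g y\<close> by auto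
    obtain r2 where r2: "r2 \<in> \<rat>" "(f x + g y) / 2 < r2" "r2 < g y"
      using Rats_dense_in_real[of "(f x + g y) / 2" "g y"] \<open>f x < g y\<close> by auto
    obtain t1 where t1: "r1 = of_rat t1" using r1(1) Rats_cases by blast
    obtain t2 where t2: "r2 = of_rat t2" using r2(1) Rats_cases by blast
    have "(of_rat t1::real) < of_rat t2" using r1 r2 t1 t2 by simp
    then have "t1 < t2" by (simp add: of_rat_less)
    then have rr: "\<rho> (Af t1) (Ag t2)" using rel by blast
    have "x \<in> Af t1" using cut_f x r1 t1 unfolding lower_cut_set_def by blast
    moreover have "Af t1 \<subseteq> topspace T" "Ag t2 \<subseteq> topspace T"
      using cut_f cut_g unfolding lower_cut_set_def by blast+
    ultimately have "y \<in> Ag t2" using chain_lemma[OF strong xy] rr by blast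
    then have "g y \<le> r2" using cut_g t2 unfolding lower_cut_set_def by blast
    then show False using r2 by simp
  qed
  define h where "h x = Inf (f ` {y. ?R x y})" for x
  have hbounds: "g x \<le> h x \<and> h x \<le> f x" if x: "x \<in> topspace T" for x
  proof
    have bdd: "\<forall>y\<in>{y. ?R x y}. g x \<le> f y"
    proof
      fix y assume "y \<in> {y. ?R x y}"
      then have "?R x y" by simp
      then have "?R y x" "y \<in> topspace T" using rtc_sym rtc_top x by metis+
      then show "g x \<le> f y" using key by blast
    qed
    show "g x \<le> h x" unfolding h_def
      by (rule cInf_greatest) (use bdd in auto)
    show "h x \<le> f x" unfolding h_def
      by (rule cInf_lower) (use bdd in \<open>auto intro: bdd_belowI\<close>)
  qed
  have hconst: "h x = h y" if "?R x y" for x y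
  proof -
    have "{z. ?R x z} = {z. ?R y z}"
      using that rtc_sym by (metis (mono_tags, opaque_lifting) rtranclp_trans)
    then show ?thesis unfolding h_def by simp
  qed
  have sat: "lambda_set_in T (topspace T - {x \<in> topspace T. h x \<in> U})" for U
  proof (rule saturated_lambda)
    fix x y assume "x \<in> topspace T - {x \<in> topspace T. h x \<in> U}" "y \<in> topspace T"
      "x \<in> T closure_of {y}"
    then have "adjR T x y" unfolding adjR_def by blast
    then have "h x = h y" using hconst by blast
    then show "y \<in> topspace T - {x \<in> topspace T. h x \<in> U}"
      using \<open>x \<in> topspace T - _\<close> \<open>y \<in> topspace T\<close> by auto
  qed auto
  have eq: "{x \<in> topspace T. h x \<in> U} = topspace T - (topspace T - {x \<in> topspace T. h x \<in> U})" for U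
    by blast
  show ?thesis
  proof (intro conjI impI)
    assume A: "\<forall>S. lambda_set_in T S \<longrightarrow> openin T S"
    have "contra_continuous_on T h"
      unfolding contra_continuous_on_def
    proof (intro allI impI)
      fix U :: "real set"
      have "openin T (topspace T - {x \<in> topspace T. h x \<in> U})" using A sat by blast
      then show "closedin T {x \<in> topspace T. h x \<in> U}"
        by (subst eq) (simp add: closedin_diff)
    qed
    then show "\<exists>h. contra_continuous_on T h \<and> (\<forall>x\<in>topspace T. g x \<le> h x \<and> h x \<le> f x)"
      using hbounds by blast
  next
    assume A: "\<forall>S. lambda_set_in T S \<longrightarrow> gdelta_in T S"
    have "baire_one_on T h"
      unfolding baire_one_on_def
    proof (intro allI impI)
      fix U :: "real set"
      have "gdelta_in T (topspace T - {x \<in> topspace T. h x \<in> U})" using A sat by blast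
      then show "fsigma_in T {x \<in> topspace T. h x \<in> U}"
        by (subst eq) (simp add: fsigma_in_diff)
    qed
    then show "\<exists>h. baire_one_on T h \<and> (\<forall>x\<in>topspace T. g x \<le> h x \<and> h x \<le> f x)"
      using hbounds by blast
  qed
qed

end
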